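(* Let $q$ be a prime power, $e\ge 2$, $r$ a positive integer, $a\in\mathbb{F}_{q^e}$ with $a\neq 0$, $f(x)=x^r(x^{q-1}+a)\in\mathbb{F}_{q^e}[x]$, and $\ell=q^{e-1}+\cdots+q+1$. Then $f(x)$ permutes $\mathbb{F}_{q^e}$ and is the composition of a linearized binomial and a monomial if and only if $(-a)^{\ell}\neq 1$ and $r\equiv s\ell+\sum_{i=0}^{k-1}q^{hi}\pmod{q^e-1}$, where $h$ is a positive integer with $\gcd(h,e)=1$, $k$ is a positive integer whose reduction modulo $e$ is the inverse of $h$ modulo $e$, $s$ is a positive integer, and $\gcd(r,q-1)=1$.
   Context: A polynomial permutes $\mathbb{F}_{q^e}$ if it induces a bijection of $\mathbb{F}_{q^e}$. "$f$ is the composition of a linearized binomial and a monomial" means $f(x)\equiv L(x^n)\pmod{x^{q^e}-x}$ for some monomial $x^n$ and some linearized binomial $L(x)=bx^{q^m}+cx^{q^{m'}}$ with coefficients in $\mathbb{F}_{q^e}$. *)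

theory Defs
  imports "HOL-Computational_Algebra.Polynomial" "HOL-Computational_Algebra.Primes"
    "HOL-Number_Theory.Cong" "HOL-Library.Cardinality"
begin

definition prime_power :: "nat \<Rightarrow> bool" where
  "prime_power q \<longleftrightarrow> (\<exists>p k. prime p \<and> k > 0 \<and> q = p ^ k)"

definition permutes_field :: "'a::{finite,field} poly \<Rightarrow> bool" where
  "permutes_field f \<longleftrightarrow> bij (\<lambda>x. poly f x)"

text \<open>f is congruent mod x^(q^e) - x to L(x^n), L(x) = b x^(q^m) + c x^(q^m'),
  where CARD('a) = q^e.\<close>
definition lin_binom_comp_monom :: "nat \<Rightarrow> 'a::{finite,field} poly \<Rightarrow> bool" where
  "lin_binom_comp_monom q f \<longleftrightarrow>
     (\<exists>(n::nat) (m::nat) (m'::nat) (b::'a) (c::'a).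
        (monom 1 CARD('a) - monom 1 1) dvd
          (f - (monom b (n * q ^ m) + monom c (n * q ^ m'))))"

end

theory Submission
  imports Defs
begin

lemma ff_pow_M:
  fixes x :: "'a::{finite,field}"
  assumes "x \<noteq> 0"
  shows "x ^ (CARD('a) - 1) = 1"
proof -
  have "(\<Prod>y\<in>UNIV-{0}. x * y) = x ^ card (UNIV-{0::'a}) * \<Prod>(UNIV-{0::'a})"
    by (simp add: prod.distrib)
  also have "card (UNIV-{0::'a}) = CARD('a) - 1" by simp
  also have "(\<Prod>y\<in>UNIV-{0}. x * y) = (\<Prod>y\<in>UNIV-{0::'a}. y)"
    by (rule prod.reindex_bij_witness[of _ "\<lambda>y. y / x" "\<lambda>y. x * y"]) (use assms in auto)
  finally have "\<Prod>(UNIV-{0::'a}) = x ^ (CARD('a) - 1) * \<Prod>(UNIV-{0::'a})" .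
  moreover have "\<Prod>(UNIV-{0::'a}) \<noteq> 0" by simp
  ultimately show ?thesis by simp
qed

lemma ff_pow_cong:
  fixes x :: "'a::{finite,field}"
  assumes "x \<noteq> 0" "[u = v] (mod (CARD('a) - 1))"
  shows "x ^ u = x ^ v"
proof -
  have *: "x ^ u = x ^ v" if le: "v \<le> u" and c: "[u = v] (mod (CARD('a) - 1))" for u v
  proof -
    obtain t where "u = t * (CARD('a) - 1) + v" using iffD1[OF cong_le_nat[OF le] c] by blast
    then have "x ^ u = (x ^ (CARD('a) - 1)) ^ t * x ^ v"
      by (metis power_add power_mult mult.commute)
    then show ?thesis using ff_pow_M[OF assms(1)] by simp
  qed
  show ?thesis
  proof (cases "v \<le> u")
    case True then show ?thesis using * assms(2) by blast
  next
    case False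
    then have "u \<le> v" by simp
    moreover have "[v = u] (mod (CARD('a) - 1))" using assms(2) by (rule cong_sym)
    ultimately show ?thesis using *[of u v] by simp
  qed
qed

lemma ff_pow_card:
  fixes x :: "'a::{finite,field}"
  shows "x ^ CARD('a) = x"
proof (cases "x = 0")
  case True then show ?thesis by simp
next
  case False
  have "CARD('a) = Suc (CARD('a) - 1)" using zero_less_card_finite[where 'a='a] by simp
  then have "x ^ CARD('a) = x * x ^ (CARD('a) - 1)" by (metis power_Suc)
  then show ?thesis using ff_pow_M[OF False] by simp
qed

lemma ff_char_card:
  "of_nat CARD('a) = (0::'a::{finite,field})"
proof -
  have "(\<Sum>y\<in>UNIV. 1 + y) = (\<Sum>y\<in>(UNIV::'a set). y)"
    by (rule sum.reindex_bij_witness[of _ "\<lambda>y. y - 1" "\<lambda>y. 1 + y"]) auto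
  then have "of_nat CARD('a) + (\<Sum>y\<in>(UNIV::'a set). y) = (\<Sum>y\<in>(UNIV::'a set). y)"
    by (simp add: sum.distrib)
  then show ?thesis by simp
qed

lemma ff_frob:
  fixes x y :: "'a::{finite,field}"
  assumes "prime p" "CARD('a) = p ^ n"
  shows "(x + y) ^ (p ^ m) = x ^ (p ^ m) + y ^ (p ^ m)"
proof -
  have "CHAR('a) > 0" by (rule finite_imp_CHAR_pos) simp
  then have pc: "prime CHAR('a)" by (rule prime_CHAR_semidom)
  have "CHAR('a) dvd p ^ n" using ff_char_card[where 'a='a] assms(2)
    by (metis of_nat_eq_0_iff_char_dvd)
  then have "CHAR('a) dvd p" using pc prime_dvd_power by blast
  then have "CHAR('a) = p" using pc assms(1) primes_dvd_imp_eq by blast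
  then show ?thesis using freshmans_dream'[OF pc] by metis
qed



lemma ff_card_ge2: "CARD('a::{finite,field}) \<ge> 2"
proof -
  have "{0::'a, 1} \<subseteq> UNIV" by simp
  then have "card {0::'a, 1} \<le> CARD('a)" by (rule card_mono[OF finite_class.finite_UNIV])
  then show ?thesis by simp
qed

lemma card_roots_unity_le:
  fixes d :: nat
  assumes "d > 0"
  shows "card {w::'a::idom. w ^ d = 1} \<le> d"
proof -
  let ?p = "monom (1::'a) d - 1"
  have "coeff ?p d = 1" using assms by (simp add: coeff_monom)
  then have nz: "?p \<noteq> 0" by (metis coeff_0 zero_neq_one)
  have "degree ?p \<le> d"
    by (rule degree_le) (auto simp: coeff_monom)
  moreover have "{w::'a. w ^ d = 1} = {x. poly ?p x = 0}" by (auto simp: poly_monom)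
  ultimately show ?thesis using card_poly_roots_bound[OF nz] by simp
qed

lemma finite_roots_unity:
  fixes d :: nat
  assumes "d > 0"
  shows "finite {w::'a::idom. w ^ d = 1}"
proof -
  let ?p = "monom (1::'a) d - 1"
  have "coeff ?p d = 1" using assms by (simp add: coeff_monom)
  then have nz: "?p \<noteq> 0" by (metis coeff_0 zero_neq_one)
  have "{w::'a. w ^ d = 1} = {x. poly ?p x = 0}" by (auto simp: poly_monom)
  then show ?thesis using poly_roots_finite[OF nz] by simp
qed

lemma ff_power_surj:
  fixes z :: "'a::{finite,field}"
  assumes "d * m = CARD('a) - 1" "d > 0" "z ^ m = 1"
  shows "\<exists>y. y \<noteq> 0 \<and> y ^ d = z"
proof -
  let ?S = "UNIV - {0::'a}"
  let ?P = "\<lambda>y::'a. y ^ d"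
  let ?R = "{w::'a. w ^ m = 1}"
  let ?K = "{w::'a. w ^ d = 1}"
  have mpos: "m > 0" using assms(1) ff_card_ge2[where 'a='a] by (cases "m = 0") auto
  have cardS: "card ?S = d * m" using assms(1) by simp
  have sub: "?P ` ?S \<subseteq> ?R"
  proof
    fix w assume "w \<in> ?P ` ?S"
    then obtain y where y: "y \<noteq> 0" "w = y ^ d" by auto
    then have "w ^ m = y ^ (CARD('a) - 1)" by (simp add: power_mult[symmetric] assms(1))
    then show "w \<in> ?R" using ff_pow_M[OF y(1)] by simp
  qed
  have fib: "card {y \<in> ?S. ?P y = w} \<le> d" if wi: "w \<in> ?P ` ?S" for w
  proof -
    obtain y0 where y0: "y0 \<noteq> 0" "y0 ^ d = w" using wi by auto
    have fin: "finite ?K" by (rule finite_roots_unity[OF assms(2)])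
    have "{y \<in> ?S. ?P y = w} \<subseteq> (\<lambda>v. y0 * v) ` ?K"
    proof
      fix y assume "y \<in> {y \<in> ?S. ?P y = w}"
      then have yy: "y ^ d = w" by blast
      have wnz: "w \<noteq> 0" using y0 by auto
      have "(y / y0) ^ d = w / w" by (simp only: power_divide yy y0(2))
      then have "(y / y0) ^ d = 1" using wnz by simp
      then have k: "y / y0 \<in> ?K" by blast
      have "y = y0 * (y / y0)" using y0(1) by simp
      with k show "y \<in> (\<lambda>v. y0 * v) ` ?K" by (rule rev_image_eqI)
    qed
    then have "card {y \<in> ?S. ?P y = w} \<le> card ((\<lambda>v. y0 * v) ` ?K)"
      by (rule card_mono[OF finite_imageI[OF fin]])
    also have "\<dots> \<le> card ?K" by (rule card_image_le[OF fin])
    also have "\<dots> \<le> d" by (rule card_roots_unity_le[OF assms(2)])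
    finally show ?thesis .
  qed
  have eqS: "(\<Union>w\<in>?P ` ?S. {y \<in> ?S. ?P y = w}) = ?S" by auto
  have "card (\<Union>w\<in>?P ` ?S. {y \<in> ?S. ?P y = w}) \<le> (\<Sum>w\<in>?P ` ?S. card {y \<in> ?S. ?P y = w})"
    by (rule card_UN_le) simp
  then have "card ?S \<le> (\<Sum>w\<in>?P ` ?S. card {y \<in> ?S. ?P y = w})"
    by (simp only: eqS)
  also have "\<dots> \<le> (\<Sum>w\<in>?P ` ?S. d)" by (rule sum_mono) (rule fib)
  also have "\<dots> = card (?P ` ?S) * d" by simp
  finally have "d * m \<le> card (?P ` ?S) * d" using cardS by simp
  then have "m \<le> card (?P ` ?S)" using assms(2) by (simp add: mult.commute)
  moreover have "card ?R \<le> m" by (rule card_roots_unity_le[OF mpos])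
  ultimately have "?P ` ?S = ?R"
    using sub card_seteq[OF finite_roots_unity[OF mpos] sub] by simp
  moreover have "z \<in> ?R" using assms(3) by simp
  ultimately have "z \<in> ?P ` ?S" by simp
  then show ?thesis by blast
qed

lemma ff_power_noninj:
  fixes p :: nat
  assumes "prime p" "p dvd CARD('a::{finite,field}) - 1"
  shows "\<exists>y1 y2::'a. y1 \<noteq> y2 \<and> y1 \<noteq> 0 \<and> y2 \<noteq> 0 \<and> y1 ^ p = y2 ^ p"
proof (rule ccontr)
  assume H: "\<not> ?thesis"
  let ?S = "UNIV - {0::'a}"
  obtain m where m: "CARD('a) - 1 = p * m" using assms(2) by blast
  have M1: "CARD('a) \<ge> 2" by (rule ff_card_ge2)
  have mpos: "m > 0" using m M1 by (cases "m = 0") auto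
  have inj: "inj_on (\<lambda>y::'a. y ^ p) ?S"
  proof (rule inj_onI)
    fix x y assume xy: "x \<in> ?S" "y \<in> ?S" "x ^ p = y ^ p"
    show "x = y"
    proof (rule ccontr)
      assume "x \<noteq> y"
      then show False using H xy by blast
    qed
  qed
  have sub: "(\<lambda>y::'a. y ^ p) ` ?S \<subseteq> {w. w ^ m = 1}"
  proof
    fix w assume "w \<in> (\<lambda>y::'a. y ^ p) ` ?S"
    then obtain y where y: "y \<noteq> 0" "w = y ^ p" by blast
    then have "w ^ m = y ^ (CARD('a) - 1)" by (metis power_mult m)
    then show "w \<in> {w. w ^ m = 1}" using ff_pow_M[OF y(1)] by simp
  qed
  have c1: "card ((\<lambda>y::'a. y ^ p) ` ?S) = card ?S" by (rule card_image[OF inj])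
  have c2: "card ?S = p * m" using m by simp
  have c3: "card ((\<lambda>y::'a. y ^ p) ` ?S) \<le> card {w::'a. w ^ m = 1}"
    by (rule card_mono[OF finite_roots_unity[OF mpos] sub])
  have c4: "card {w::'a. w ^ m = 1} \<le> m" by (rule card_roots_unity_le[OF mpos])
  have "p * m \<le> 1 * m" using c1 c2 c3 c4 by linarith
  then have "p \<le> 1" using mpos by (meson mult_le_cancel2)
  then show False using prime_ge_2_nat[OF assms(1)] by linarith
qed


lemma pow_dvd_lemma:
  fixes x :: "'b::comm_ring_1"
  assumes "A \<ge> 1" "A \<le> B" "[B = A] (mod (N - 1))" "N \<ge> 2"
  shows "(x ^ N - x) dvd (x ^ B - x ^ A)"
proof -
  obtain t where t: "B = t * (N - 1) + A" using iffD1[OF cong_le_nat[OF assms(2)] assms(3)] by blast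
  have e1: "x ^ N - x = x * (x ^ (N - 1) - 1)"
    using assms(4) by (metis (no_types, lifting) Suc_diff_1 le_trans one_le_numeral not_one_le_zero
      power_Suc right_diff_distrib' mult.right_neutral not_less_eq_eq gr0I)
  have e2: "x ^ B - x ^ A = x ^ (A - 1) * (x * ((x ^ (N - 1)) ^ t - 1))"
  proof -
    have "x ^ B = x ^ (A - 1) * x * (x ^ (N - 1)) ^ t"
      using t assms(1) by (metis (no_types, lifting) Suc_diff_1 add.commute le_trans less_one
        not_le power_Suc2 power_add power_mult mult.commute zero_less_one)
    moreover have "x ^ A = x ^ (A - 1) * x"
      using assms(1) by (metis Suc_diff_1 le_trans less_one not_le power_Suc2 zero_less_one)
    ultimately show ?thesis by (simp add: algebra_simps)
  qed
  have "(x ^ (N - 1) - 1) dvd ((x ^ (N - 1)) ^ t - 1)"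
    by (simp add: power_diff_1_eq)
  then have "x * (x ^ (N - 1) - 1) dvd x * ((x ^ (N - 1)) ^ t - 1)" by (rule mult_dvd_mono[OF dvd_refl])
  then show ?thesis unfolding e1 e2 by (rule dvd_mult)
qed

lemma monom_dvd_lemma:
  assumes "A \<ge> 1" "B \<ge> 1" "[A = B] (mod (N - 1))" "N \<ge> 2"
  shows "(monom (1::'b::comm_ring_1) N - monom 1 1) dvd (monom 1 A - monom 1 B)"
proof -
  have m: "monom (1::'b) n = [:0, 1:] ^ n" for n by (simp add: monom_altdef)
  show ?thesis
  proof (cases "A \<le> B")
    case True
    have "([:0, 1:] ^ N - [:0,1:]) dvd ([:0, 1:] ^ B - [:0, 1::'b:] ^ A)"
      by (rule pow_dvd_lemma) (use assms True cong_sym in auto)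
    then have "([:0, 1:] ^ N - [:0,1:]) dvd -([:0, 1:] ^ B - [:0, 1::'b:] ^ A)" by (rule dvd_minus_iff[THEN iffD2])
    then show ?thesis unfolding m by simp
  next
    case False
    have "([:0, 1:] ^ N - [:0,1:]) dvd ([:0, 1:] ^ A - [:0, 1::'b:] ^ B)"
      by (rule pow_dvd_lemma) (use assms False in auto)
    then show ?thesis unfolding m by simp
  qed
qed

lemma ff_unique4:
  fixes a b c :: "'a::{finite,field}"
  assumes H: "\<And>x. x \<noteq> 0 \<Longrightarrow> x ^ A1 + a * x ^ A2 = b * x ^ B1 + c * x ^ B2"
    and lt: "A1 < CARD('a) - 1" "A2 < CARD('a) - 1" "B1 < CARD('a) - 1" "B2 < CARD('a) - 1"
    and ne: "A1 \<noteq> A2" and a: "a \<noteq> 0"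
  shows "(B1 = A1 \<and> B2 = A2) \<or> (B1 = A2 \<and> B2 = A1)"
proof -
  define g where "g = monom 1 A1 + monom a A2 - monom b B1 - monom c B2"
  have pg: "poly g x = 0" if "x \<noteq> 0" for x
    using H[OF that] by (simp add: g_def poly_monom)
  have g0: "g = 0"
  proof (rule ccontr)
    assume nz: "g \<noteq> 0"
    have "degree g \<le> CARD('a) - 2"
      by (rule degree_le) (use lt in \<open>auto simp: g_def coeff_monom\<close>)
    moreover have "UNIV - {0::'a} \<subseteq> {x. poly g x = 0}" using pg by auto
    then have "card (UNIV - {0::'a}) \<le> card {x. poly g x = 0}"
      by (rule card_mono[OF poly_roots_finite[OF nz]])
    moreover have "card (UNIV - {0::'a}) = CARD('a) - 1" by simp
    ultimately have "CARD('a) - 1 \<le> CARD('a) - 2" using card_poly_roots_bound[OF nz] by linarith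
    then show False using ff_card_ge2[where 'a='a] by linarith
  qed
  have c1: "coeff g A1 = 0" and c2: "coeff g A2 = 0" using g0 by simp_all
  have "B1 = A1 \<or> B2 = A1"
  proof (rule ccontr)
    assume "\<not> ?thesis"
    then have "coeff g A1 = 1" using ne by (simp add: g_def coeff_monom)
    then show False using c1 by simp
  qed
  moreover have "B1 = A2 \<or> B2 = A2"
  proof (rule ccontr)
    assume "\<not> ?thesis"
    then have "coeff g A2 = a" using ne by (simp add: g_def coeff_monom)
    then show False using c2 a by simp
  qed
  ultimately show ?thesis using ne by auto
qed



lemma nat_cong_int: "[a = b] (mod n) \<longleftrightarrow> int n dvd int a - int b" for a b n :: nat
  by (metis cong_int_iff cong_iff_dvd_diff)

lemma int_dvd_pow_minus1: "(x - 1) dvd (x ^ n - 1)" for x :: int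
  by (simp add: power_diff_1_eq)

lemma int_geo: "(x - 1) * (\<Sum>i<n. x ^ i) = x ^ n - 1" for x :: int
  by (simp add: power_diff_1_eq)

lemma hk_form:
  fixes e k h :: nat
  assumes "e \<ge> 2" "[k * h = 1] (mod e)"
  shows "h * k = e * (h * k div e) + 1"
proof -
  have "(k * h) mod e = 1 mod e" using assms(2) unfolding cong_def .
  also have "1 mod e = 1" using assms(1) by simp
  finally have "(h * k) mod e = 1" by (simp add: mult.commute)
  moreover have "h * k div e * e + h * k mod e = h * k" by (rule div_mult_mod_eq)
  moreover have "e * (h * k div e) = h * k div e * e" by (rule mult.commute)
  ultimately show ?thesis by linarith
qed

lemma dvd_Qhk:
  fixes Q :: int
  assumes "h * k = e * c + 1"
  shows "(Q ^ e - 1) dvd (Q ^ (h * k) - Q)"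
proof -
  have "Q ^ (h * k) = Q * (Q ^ e) ^ c" unfolding assms by (simp add: power_add power_mult)
  then have "Q ^ (h * k) - Q = Q * ((Q ^ e) ^ c - 1)" by (simp add: right_diff_distrib)
  moreover have "(Q ^ e - 1) dvd ((Q ^ e) ^ c - 1)" by (rule int_dvd_pow_minus1)
  ultimately show ?thesis by simp
qed

lemma T_ident:
  fixes Q :: int
  shows "(Q ^ h - 1) * (\<Sum>i<k. Q ^ (h * i)) = Q ^ (h * k) - 1"
proof -
  have "(\<Sum>i<k. Q ^ (h * i)) = (\<Sum>i<k. (Q ^ h) ^ i)" by (simp add: power_mult)
  then show ?thesis using int_geo[of "Q ^ h" k] by (simp add: power_mult)
qed

lemma nt_back_int:
  fixes Q r s :: int and e h k :: nat
  assumes "e \<ge> 2" "[k * h = 1] (mod e)"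
    and "(Q ^ e - 1) dvd (r - (s * (\<Sum>i<e. Q ^ i) + (\<Sum>i<k. Q ^ (h * i))))"
  shows "(Q ^ e - 1) dvd (r * Q ^ h - r - (Q - 1))"
proof -
  define L where "L = (\<Sum>i<e. Q ^ i)"
  define T where "T = (\<Sum>i<k. Q ^ (h * i))"
  define Sh where "Sh = (\<Sum>i<h. Q ^ i)"
  have hk: "h * k = e * (h * k div e) + 1" by (rule hk_form[OF assms(1,2)])
  have T1: "(Q ^ h - 1) * T = Q ^ (h * k) - 1" unfolding T_def by (rule T_ident)
  have L1: "(Q - 1) * L = Q ^ e - 1" unfolding L_def by (rule int_geo)
  have S1: "Q ^ h - 1 = (Q - 1) * Sh" unfolding Sh_def by (rule int_geo[symmetric])
  have D1: "(Q ^ e - 1) dvd (Q ^ (h * k) - Q)" by (rule dvd_Qhk[OF hk])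
  have eq: "r * Q ^ h - r - (Q - 1) = (r - (s * L + T)) * (Q ^ h - 1) + s * Sh * ((Q - 1) * L) + (Q ^ (h * k) - Q)"
  proof -
    have "r * Q ^ h - r - (Q - 1) = (r - (s * L + T)) * (Q ^ h - 1) + s * L * (Q ^ h - 1) + ((Q ^ h - 1) * T - (Q - 1))"
      by (simp add: algebra_simps)
    also have "s * L * (Q ^ h - 1) = s * Sh * ((Q - 1) * L)" unfolding S1 by (simp add: algebra_simps)
    also have "(Q ^ h - 1) * T - (Q - 1) = Q ^ (h * k) - Q" using T1 by simp
    finally show ?thesis .
  qed
  have "(Q ^ e - 1) dvd (r - (s * L + T)) * (Q ^ h - 1)" using assms(3) unfolding L_def T_def by simp
  moreover have "(Q ^ e - 1) dvd s * Sh * ((Q - 1) * L)" unfolding L1 by simp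
  ultimately show ?thesis unfolding eq using D1 by (intro dvd_add) auto
qed

lemma nt_gcd:
  fixes Q r :: int and e h :: nat
  assumes "Q \<ge> 2" "e \<ge> 1" "(Q ^ e - 1) dvd (r * (Q ^ h - 1) - (Q - 1))"
  shows "coprime h e"
proof -
  define g where "g = gcd h e"
  have gpos: "g > 0" using assms(2) unfolding g_def by simp
  obtain a where a: "h = g * a" unfolding g_def by (metis gcd_dvd1 dvdE)
  obtain b where b: "e = g * b" unfolding g_def by (metis gcd_dvd2 dvdE)
  have d1: "(Q ^ g - 1) dvd (Q ^ h - 1)" unfolding a power_mult by (rule int_dvd_pow_minus1)
  have d2: "(Q ^ g - 1) dvd (Q ^ e - 1)" unfolding b power_mult by (rule int_dvd_pow_minus1)
  have "(Q ^ g - 1) dvd (r * (Q ^ h - 1) - (Q - 1))" using d2 assms(3) by (rule dvd_trans)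
  moreover have "(Q ^ g - 1) dvd r * (Q ^ h - 1)" using d1 by simp
  ultimately have "(Q ^ g - 1) dvd (r * (Q ^ h - 1) - (r * (Q ^ h - 1) - (Q - 1)))"
    by (rule dvd_diff[rotated])
  then have "(Q ^ g - 1) dvd (Q - 1)" by simp
  then have "Q ^ g - 1 \<le> Q - 1" by (rule zdvd_imp_le) (use assms(1) in simp)
  then have Qg: "Q ^ g \<le> Q" by simp
  have "g \<le> 1"
  proof (rule ccontr)
    assume "\<not> g \<le> 1"
    then have "Q ^ 2 \<le> Q ^ g" using assms(1) by (intro power_increasing) auto
    moreover have "Q ^ 2 = Q * Q" by (simp add: power2_eq_square)
    moreover have "Q * Q \<ge> 2 * Q" using assms(1) by (intro mult_right_mono) auto
    ultimately show False using Qg assms(1) by linarith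
  qed
  then have "g = 1" using gpos by simp
  then show ?thesis unfolding g_def by (simp add: coprime_iff_gcd_eq_1)
qed


lemma int_M: "q \<ge> 1 \<Longrightarrow> int (q ^ e - 1) = int q ^ e - 1"
  by (simp add: of_nat_diff)

lemma nt_backward:
  fixes q e r h k s :: nat
  assumes "q \<ge> 2" "e \<ge> 2" "[k * h = 1] (mod e)"
    and "[r = s * (\<Sum>i<e. q ^ i) + (\<Sum>i<k. q ^ (h * i))] (mod (q ^ e - 1))"
  shows "[r * q ^ h = r + (q - 1)] (mod (q ^ e - 1))"
proof -
  have "(int q ^ e - 1) dvd (int r - (int s * (\<Sum>i<e. int q ^ i) + (\<Sum>i<k. int q ^ (h * i))))"
    using assms(4) int_M[of q e] assms(1) unfolding nat_cong_int by simp
  then have "(int q ^ e - 1) dvd (int r * int q ^ h - int r - (int q - 1))"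
    by (rule nt_back_int[OF assms(2,3)])
  then show ?thesis using int_M[of q e] assms(1) unfolding nat_cong_int by (simp add: of_nat_diff algebra_simps)
qed

lemma nt_forward:
  fixes q e r j :: nat
  assumes q2: "q \<ge> 2" and e2: "e \<ge> 2" and c: "[r * q ^ j = r + (q - 1)] (mod (q ^ e - 1))"
  shows "\<exists>h k s. h > 0 \<and> coprime h e \<and> k > 0 \<and> [k * h = 1] (mod e) \<and> s > 0 \<and>
     [r = s * (\<Sum>i<e. q ^ i) + (\<Sum>i<k. q ^ (h * i))] (mod (q ^ e - 1))"
proof -
  define Q where "Q = int q"
  define R where "R = int r"
  have Q2: "Q \<ge> 2" using q2 unfolding Q_def by simp
  have D0: "(Q ^ e - 1) dvd (R * Q ^ j - R - (Q - 1))"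
    using c int_M[of q e] q2 unfolding nat_cong_int Q_def R_def by (simp add: of_nat_diff algebra_simps)
  define h where "h = j mod e"
  define cj where "cj = j div e"
  have jeq: "Q ^ j = Q ^ h * (Q ^ e) ^ cj"
  proof -
    have "j = e * cj + h" unfolding h_def cj_def by simp
    then have "Q ^ j = (Q ^ e) ^ cj * Q ^ h" by (simp only: power_add power_mult)
    then show ?thesis by (simp only: mult.commute)
  qed
  have "(Q ^ e - 1) dvd R * Q ^ h * ((Q ^ e) ^ cj - 1)"
    using int_dvd_pow_minus1[of "Q ^ e" cj] by simp
  then have "(Q ^ e - 1) dvd (R * Q ^ j - R - (Q - 1)) - R * Q ^ h * ((Q ^ e) ^ cj - 1)"
    using D0 by (rule dvd_diff[rotated])
  moreover have "(R * Q ^ j - R - (Q - 1)) - R * Q ^ h * ((Q ^ e) ^ cj - 1) = R * (Q ^ h - 1) - (Q - 1)"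
    unfolding jeq by (simp add: algebra_simps)
  ultimately have D: "(Q ^ e - 1) dvd (R * (Q ^ h - 1) - (Q - 1))" by simp
  have Qe: "Q ^ e > Q"
  proof -
    have "Q ^ 2 \<le> Q ^ e" using Q2 e2 by (intro power_increasing) auto
    moreover have "Q ^ 2 = Q * Q" by (simp add: power2_eq_square)
    moreover have "Q * Q \<ge> 2 * Q" using Q2 by (intro mult_right_mono) auto
    ultimately show ?thesis using Q2 by linarith
  qed
  have hpos: "h > 0"
  proof (rule ccontr)
    assume "\<not> h > 0"
    then have "h = 0" by simp
    then have "(Q ^ e - 1) dvd - (Q - 1)" using D by simp
    then have "(Q ^ e - 1) dvd (Q - 1)" by (simp only: dvd_minus_iff)
    then have "Q ^ e - 1 \<le> Q - 1" by (rule zdvd_imp_le) (use Q2 in simp)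
    then show False using Qe by simp
  qed
  have cop: "coprime h e" by (rule nt_gcd[OF Q2 _ D]) (use e2 in simp)
  obtain k where k: "[h * k = Suc 0] (mod e)" using cong_solve_coprime_nat[OF cop] by blast
  then have kh: "[k * h = 1] (mod e)" by (simp add: mult.commute)
  have kpos: "k > 0"
  proof (rule ccontr)
    assume "\<not> k > 0"
    then have "[0 = 1] (mod e)" using kh by simp
    then show False using e2 unfolding cong_def by simp
  qed
  have hk: "h * k = e * (h * k div e) + 1" by (rule hk_form[OF e2 kh])
  define L where "L = (\<Sum>i<e. Q ^ i)"
  define T where "T = (\<Sum>i<k. Q ^ (h * i))"
  define Sh where "Sh = (\<Sum>i<h. Q ^ i)"
  have T1: "(Q ^ h - 1) * T = Q ^ (h * k) - 1" unfolding T_def by (rule T_ident)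
  have L1: "(Q - 1) * L = Q ^ e - 1" unfolding L_def by (rule int_geo)
  have S1: "Q ^ h - 1 = (Q - 1) * Sh" unfolding Sh_def by (rule int_geo[symmetric])
  have D1: "(Q ^ e - 1) dvd (Q ^ (h * k) - Q)" by (rule dvd_Qhk[OF hk])
  have Qm1: "Q - 1 \<noteq> 0" using Q2 by simp
  have eqA: "R * (Q ^ h - 1) - (Q - 1) = (Q - 1) * (R * Sh - 1)" unfolding S1 by (simp add: algebra_simps)
  from D have "(Q - 1) * L dvd R * (Q ^ h - 1) - (Q - 1)" by (simp only: L1)
  then have "(Q - 1) * L dvd (Q - 1) * (R * Sh - 1)" by (simp only: eqA)
  then have A1: "L dvd (R * Sh - 1)" using Qm1 by simp
  have eqB: "Q ^ (h * k) - Q = (Q - 1) * (Sh * T - 1)"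
  proof -
    have "Q ^ (h * k) - Q = (Q ^ h - 1) * T - (Q - 1)" using T1 by simp
    also have "\<dots> = (Q - 1) * (Sh * T - 1)" unfolding S1 by (simp add: algebra_simps)
    finally show ?thesis .
  qed
  from D1 have "(Q - 1) * L dvd Q ^ (h * k) - Q" by (simp only: L1)
  then have "(Q - 1) * L dvd (Q - 1) * (Sh * T - 1)" by (simp only: eqB)
  then have A2: "L dvd (Sh * T - 1)" using Qm1 by simp
  have eqC: "R - T = T * (R * Sh - 1) - T * (Sh * T - 1) - (R - T) * (Sh * T - 1)"
    by (simp add: algebra_simps)
  have "L dvd (R - T)"
    by (subst eqC) (intro dvd_diff dvd_mult A1 A2)
  then obtain t where t: "R - T = L * t" by blast
  define s0 where "s0 = t mod (Q - 1) + (Q - 1)"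
  have "t mod (Q - 1) \<ge> 0" using Q2 by simp
  then have s0pos: "s0 > 0" unfolding s0_def using Q2 by linarith
  have tt: "t div (Q - 1) * (Q - 1) + t mod (Q - 1) = t" by (rule div_mult_mod_eq)
  have "(Q - 1) * (t div (Q - 1) - 1) = t div (Q - 1) * (Q - 1) - (Q - 1)" by (simp add: algebra_simps)
  then have ts: "t - s0 = (Q - 1) * (t div (Q - 1) - 1)" using tt unfolding s0_def by linarith
  have "R - (s0 * L + T) = L * (t - s0)" using t by (simp add: algebra_simps)
  also have "\<dots> = ((Q - 1) * L) * (t div (Q - 1) - 1)" unfolding ts by (simp add: algebra_simps)
  also have "\<dots> = (Q ^ e - 1) * (t div (Q - 1) - 1)" by (simp only: L1)
  finally have E: "(Q ^ e - 1) dvd (R - (s0 * L + T))" by simp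
  define s where "s = nat s0"
  have ss: "int s = s0" unfolding s_def using s0pos by simp
  have "[r = s * (\<Sum>i<e. q ^ i) + (\<Sum>i<k. q ^ (h * i))] (mod (q ^ e - 1))"
    unfolding nat_cong_int using E int_M[of q e] q2 ss
    unfolding Q_def R_def L_def T_def by simp
  moreover have "s > 0" using ss s0pos by simp
  ultimately show ?thesis using hpos cop kpos kh by blast
qed


lemma nat_geo: "q \<ge> 1 \<Longrightarrow> (q - 1) * (\<Sum>i<n. q ^ i) = q ^ n - (1::nat)"
proof -
  assume q: "q \<ge> 1"
  have "int ((q - 1) * (\<Sum>i<n. q ^ i)) = (int q - 1) * (\<Sum>i<n. int q ^ i)"
    using q by (simp add: of_nat_diff)
  also have "\<dots> = int q ^ n - 1" by (rule int_geo)
  also have "\<dots> = int (q ^ n - 1)" using q by (simp add: of_nat_diff)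
  finally show ?thesis by (simp only: of_nat_eq_iff)
qed

lemma qe_cong_1: "q \<ge> 1 \<Longrightarrow> [q ^ e = 1] (mod (q ^ e - 1))" for q e :: nat
proof -
  assume "q \<ge> 1"
  then have "q ^ e \<ge> 1" by simp
  then have "int (q ^ e - 1) dvd int (q ^ e) - int 1" by (simp add: of_nat_diff)
  then show ?thesis unfolding nat_cong_int .
qed

lemma exp_rot:
  fixes q e n m m' X Y :: nat
  assumes "e \<ge> 1" "q \<ge> 1" "[n * q ^ m = X] (mod (q ^ e - 1))" "[n * q ^ m' = Y] (mod (q ^ e - 1))"
  shows "\<exists>j. [X * q ^ j = Y] (mod (q ^ e - 1))"
proof -
  define j where "j = (e - 1) * m + m'"
  have c1: "[X * q ^ j = n * q ^ m * q ^ j] (mod (q ^ e - 1))"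
    by (rule cong_mult[OF cong_sym[OF assms(3)] cong_refl])
  have em: "m + (e - 1) * m = e * m" using assms(1) by (cases e) auto
  have mj: "m + j = e * m + m'" unfolding j_def using em by simp
  have eq: "n * q ^ m * q ^ j = (q ^ e) ^ m * (n * q ^ m')"
  proof -
    have "q ^ m * q ^ j = q ^ (m + j)" by (simp only: power_add)
    also have "\<dots> = (q ^ e) ^ m * q ^ m'" unfolding mj by (simp only: power_add power_mult)
    finally have "q ^ m * q ^ j = (q ^ e) ^ m * q ^ m'" .
    then show ?thesis by (simp only: mult.assoc mult.left_commute)
  qed
  have c2: "[(q ^ e) ^ m * (n * q ^ m') = 1 ^ m * (n * q ^ m')] (mod (q ^ e - 1))"
    by (rule cong_mult[OF cong_pow[OF qe_cong_1[OF assms(2)]] cong_refl])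
  have c2': "[(q ^ e) ^ m * (n * q ^ m') = n * q ^ m'] (mod (q ^ e - 1))"
    using c2 by (simp only: power_one mult_1)
  have "[X * q ^ j = (q ^ e) ^ m * (n * q ^ m')] (mod (q ^ e - 1))"
    using c1 unfolding eq .
  then have "[X * q ^ j = n * q ^ m'] (mod (q ^ e - 1))" using c2' by (rule cong_trans)
  then have "[X * q ^ j = Y] (mod (q ^ e - 1))" using assms(4) by (rule cong_trans)
  then show ?thesis by blast
qed


theorem theorem1p4:
  fixes q e r :: nat and a :: "'a::{finite,field}"
  assumes "prime_power q" and "e \<ge> 2" and "CARD('a) = q ^ e"
    and "r > 0" and "a \<noteq> 0"
  defines "f \<equiv> monom (1::'a) r * (monom 1 (q - 1) + [:a:])"
    and "l \<equiv> (\<Sum>i<e. q ^ i)"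
  shows "(permutes_field f \<and> lin_binom_comp_monom q f) \<longleftrightarrow>
    ((- a) ^ l \<noteq> 1 \<and> coprime r (q - 1) \<and>
     (\<exists>h k s :: nat. h > 0 \<and> coprime h e \<and> k > 0 \<and> [k * h = 1] (mod e) \<and> s > 0 \<and>
        [r = s * l + (\<Sum>i<k. q ^ (h * i))] (mod (q ^ e - 1))))"
proof -
  obtain p k0 where pk: "prime p" "k0 > 0" "q = p ^ k0" using assms(1) unfolding prime_power_def by blast
  have q2: "q \<ge> 2" using pk by (metis prime_ge_2_nat one_le_power order.trans self_le_power le_add2 gr0_implies_Suc
      Suc_1 numeral_le_one_iff prime_gt_1_nat less_imp_le_nat)
  have q1: "q \<ge> 1" using q2 by simp
  have e1: "e \<ge> 1" using assms(2) by simp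
  have M: "CARD('a) - 1 = q ^ e - 1" using assms(3) by simp
  have pf: "poly f x = x ^ r * (x ^ (q - 1) + a)" for x
    by (simp add: f_def poly_monom)
  have fsplit: "f = monom 1 (r + (q - 1)) + monom a r"
    unfolding f_def by (simp add: distrib_left mult_monom monom_0[symmetric])
  have pf2: "poly f x = x ^ (r + (q - 1)) + a * x ^ r" for x
    unfolding pf by (simp add: power_add algebra_simps)
  have f0: "poly f 0 = 0" using assms(4) pf by simp
  have lq: "(q - 1) * l = CARD('a) - 1" unfolding l_def M by (rule nat_geo[OF q1])
  have qe_gt: "q ^ e > q"
  proof -
    have "q ^ 2 \<le> q ^ e" using q1 assms(2) by (intro power_increasing) auto
    moreover have "q ^ 2 = q * q" by (simp add: power2_eq_square)
    moreover have "q * q \<ge> 2 * q" using q2 by (intro mult_right_mono) auto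
    ultimately show ?thesis using q2 by linarith
  qed
  have qm_lt: "q - 1 < q ^ e - 1" using qe_gt q2 by linarith
  show ?thesis
  proof
    assume L: "permutes_field f \<and> lin_binom_comp_monom q f"
    have inj: "inj (poly f)" using L unfolding permutes_field_def bij_def by blast
    have A1: "(- a) ^ l \<noteq> 1"
    proof
      assume al: "(- a) ^ l = 1"
      obtain y where y: "y \<noteq> 0" "y ^ (q - 1) = - a"
        using ff_power_surj[OF lq _ al] q2 by auto
      have "poly f y = 0" using pf y by simp
      then have "poly f y = poly f 0" using f0 by simp
      then have "y = 0" by (rule injD[OF inj])
      then show False using y by simp
    qed
    have A2: "coprime r (q - 1)"
    proof (rule ccontr)
      assume nc: "\<not> coprime r (q - 1)"
      then have "gcd r (q - 1) \<noteq> 1" by (simp add: coprime_iff_gcd_eq_1)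
      then obtain p' where p': "prime p'" "p' dvd gcd r (q - 1)" using prime_factor_nat by blast
      then have pr: "p' dvd r" and pq: "p' dvd q - 1" by auto
      have "p' dvd CARD('a) - 1" using pq lq[symmetric] by (metis dvd_mult2)
      then obtain y1 y2 :: 'a where yy: "y1 \<noteq> y2" "y1 \<noteq> 0" "y2 \<noteq> 0" "y1 ^ p' = y2 ^ p'"
        using ff_power_noninj[OF p'(1)] by blast
      obtain r' where r': "r = p' * r'" using pr by blast
      obtain t' where t': "q - 1 = p' * t'" using pq by blast
      have "y1 ^ r = y2 ^ r" unfolding r' power_mult yy(4) by simp
      moreover have "y1 ^ (q - 1) = y2 ^ (q - 1)" unfolding t' power_mult yy(4) by simp
      ultimately have "poly f y1 = poly f y2" unfolding pf by simp
      then have "y1 = y2" by (rule injD[OF inj])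
      then show False using yy(1) by simp
    qed
    obtain n m m' b c where dv: "(monom 1 CARD('a) - monom 1 1) dvd
          (f - (monom b (n * q ^ m) + monom c (n * q ^ m')))"
      using L unfolding lin_binom_comp_monom_def by blast
    then obtain w where w: "f - (monom b (n * q ^ m) + monom c (n * q ^ m')) = (monom 1 CARD('a) - monom 1 1) * w"
      by (rule dvdE)
    have fx: "poly f x = b * x ^ (n * q ^ m) + c * x ^ (n * q ^ m')" for x
    proof -
      have "poly (f - (monom b (n * q ^ m) + monom c (n * q ^ m'))) x = poly ((monom 1 CARD('a) - monom 1 1) * w) x"
        using w by simp
      also have "\<dots> = 0" by (simp add: poly_monom ff_pow_card)
      finally show ?thesis by (simp add: poly_monom)
    qed
    define Mo where "Mo = CARD('a) - 1"
    have Mo_pos: "Mo > 0" unfolding Mo_def using ff_card_ge2[where 'a='a] by simp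
    have red: "x ^ t = x ^ (t mod Mo)" if "x \<noteq> 0" for x :: 'a and t
      by (rule ff_pow_cong[OF that]) (simp add: cong_def Mo_def)
    have H: "x ^ ((r + (q - 1)) mod Mo) + a * x ^ (r mod Mo) = b * x ^ ((n * q ^ m) mod Mo) + c * x ^ ((n * q ^ m') mod Mo)"
      if "x \<noteq> 0" for x
      using pf2[of x] fx[of x] red[OF that] by metis
    have ne: "(r + (q - 1)) mod Mo \<noteq> r mod Mo"
    proof
      assume "(r + (q - 1)) mod Mo = r mod Mo"
      then have "[r + (q - 1) = r + 0] (mod Mo)" by (simp add: cong_def)
      then have "[q - 1 = 0] (mod Mo)" by (simp only: cong_add_lcancel_nat)
      then have "Mo dvd q - 1" by (simp add: cong_0_iff)
      moreover have "q - 1 > 0" using q2 by simp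
      ultimately have "Mo \<le> q - 1" by (simp add: dvd_imp_le)
      then show False using qm_lt M unfolding Mo_def by simp
    qed
    have U: "((n * q ^ m) mod Mo = (r + (q - 1)) mod Mo \<and> (n * q ^ m') mod Mo = r mod Mo) \<or>
             ((n * q ^ m) mod Mo = r mod Mo \<and> (n * q ^ m') mod Mo = (r + (q - 1)) mod Mo)"
      by (rule ff_unique4[OF H _ _ _ _ ne assms(5)]) (use Mo_pos in \<open>simp_all add: Mo_def\<close>)
    have Moq: "Mo = q ^ e - 1" unfolding Mo_def M ..
    have "\<exists>j. [r * q ^ j = r + (q - 1)] (mod (q ^ e - 1))"
    proof (rule disjE[OF U])
      assume u: "(n * q ^ m) mod Mo = (r + (q - 1)) mod Mo \<and> (n * q ^ m') mod Mo = r mod Mo"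
      show ?thesis
        by (rule exp_rot[OF e1 q1, of n m' _ m]) (use u in \<open>simp_all add: cong_def Moq\<close>)
    next
      assume u: "(n * q ^ m) mod Mo = r mod Mo \<and> (n * q ^ m') mod Mo = (r + (q - 1)) mod Mo"
      show ?thesis
        by (rule exp_rot[OF e1 q1, of n m _ m']) (use u in \<open>simp_all add: cong_def Moq\<close>)
    qed
    then obtain j where "[r * q ^ j = r + (q - 1)] (mod (q ^ e - 1))" by blast
    from nt_forward[OF q2 assms(2) this]
    have A3: "\<exists>h k s. h > 0 \<and> coprime h e \<and> k > 0 \<and> [k * h = 1] (mod e) \<and> s > 0 \<and>
        [r = s * l + (\<Sum>i<k. q ^ (h * i))] (mod (q ^ e - 1))" unfolding l_def .
    show "(- a) ^ l \<noteq> 1 \<and> coprime r (q - 1) \<and> (\<exists>h k s. h > 0 \<and> coprime h e \<and> k > 0 \<and> [k * h = 1] (mod e) \<and> s > 0 \<and>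
        [r = s * l + (\<Sum>i<k. q ^ (h * i))] (mod (q ^ e - 1)))"
      using A1 A2 A3 by blast
  next
    assume R: "(- a) ^ l \<noteq> 1 \<and> coprime r (q - 1) \<and> (\<exists>h k s. h > 0 \<and> coprime h e \<and> k > 0 \<and> [k * h = 1] (mod e) \<and> s > 0 \<and>
        [r = s * l + (\<Sum>i<k. q ^ (h * i))] (mod (q ^ e - 1)))"
    then have al: "(- a) ^ l \<noteq> 1" and cr: "coprime r (q - 1)" by auto
    from R obtain h k s where hks: "h > 0" "[k * h = 1] (mod e)"
        "[r = s * l + (\<Sum>i<k. q ^ (h * i))] (mod (q ^ e - 1))" by blast
    have C: "[r * q ^ h = r + (q - 1)] (mod (q ^ e - 1))"
      by (rule nt_backward[OF q2 assms(2) hks(2)]) (use hks(3) in \<open>simp add: l_def\<close>)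
    have Cint: "int (q ^ e - 1) dvd int r * (int q ^ h - 1) - int (q - 1)"
      using C q1 unfolding nat_cong_int by (simp add: of_nat_diff algebra_simps)
    have crM: "coprime r (q ^ e - 1)"
    proof (rule ccontr)
      assume "\<not> coprime r (q ^ e - 1)"
      then have "gcd r (q ^ e - 1) \<noteq> 1" by (simp add: coprime_iff_gcd_eq_1)
      then obtain p' where p': "prime p'" "p' dvd gcd r (q ^ e - 1)" using prime_factor_nat by blast
      then have pr: "p' dvd r" and pM: "p' dvd q ^ e - 1" by auto
      have "int p' dvd int r * (int q ^ h - 1) - int (q - 1)"
        using pM Cint by (meson dvd_trans int_dvd_int_iff)
      moreover have "int p' dvd int r * (int q ^ h - 1)" using pr by simp
      ultimately have "int p' dvd int r * (int q ^ h - 1) - (int r * (int q ^ h - 1) - int (q - 1))"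
        by (rule dvd_diff[rotated])
      then have "int p' dvd int (q - 1)" by simp
      then have "p' dvd q - 1" by (simp only: int_dvd_int_iff)
      then have pg: "p' dvd gcd r (q - 1)" using pr by simp
      have g1: "gcd r (q - 1) = 1" using cr by (simp add: coprime_iff_gcd_eq_1)
      from pg have "p' dvd 1" by (simp only: g1)
      then show False using p'(1) by simp
    qed
    obtain u where u: "[r * u = Suc 0] (mod (q ^ e - 1))" using cong_solve_coprime_nat[OF crM] by blast
    have Mge: "q ^ e - 1 \<ge> 2" using qe_gt q2 by linarith
    have upos: "r * u > 0"
    proof (rule ccontr)
      assume "\<not> r * u > 0"
      then have "r * u = 0" by simp
      then have "[0 = Suc 0] (mod (q ^ e - 1))" using u by metis
      then show False using Mge unfolding cong_def by simp
    qed
    have zinv: "(z ^ r) ^ u = z" for z :: 'a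
    proof (cases "z = 0")
      case True then show ?thesis using upos by (simp add: power_mult[symmetric])
    next
      case False
      have "z ^ (r * u) = z ^ 1" by (rule ff_pow_cong[OF False]) (use u M in simp)
      then show ?thesis by (simp add: power_mult)
    qed
    have Pinj: "x = y" if "x ^ r = y ^ r" for x y :: 'a
      using zinv[of x] zinv[of y] that by metis
    define Qh where "Qh = q ^ h"
    have Qh: "Qh = p ^ (k0 * h)" unfolding Qh_def pk(3) by (simp add: power_mult)
    have card_p: "CARD('a) = p ^ (k0 * e)" using assms(3) pk(3) by (simp add: power_mult)
    have frob: "(x + y) ^ Qh = x ^ Qh + y ^ Qh" for x y :: 'a
      unfolding Qh by (rule ff_frob[OF pk(1) card_p])
    have Qh1: "Qh \<ge> 1" unfolding Qh_def using q1 by simp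
    define Lf where "Lf = (\<lambda>y::'a. y ^ Qh + a * y)"
    have fL: "poly f x = Lf (x ^ r)" for x
    proof (cases "x = 0")
      case True
      have z: "(0::'a) ^ r = 0" by (rule zero_power[OF assms(4)])
      have zq: "(0::'a) ^ Qh = 0" by (rule zero_power) (use Qh1 in simp)
      show ?thesis unfolding True Lf_def z zq f0 by simp
    next
      case False
      have "x ^ (r + (q - 1)) = x ^ (r * q ^ h)"
        by (rule ff_pow_cong[OF False]) (use C M cong_sym in simp)
      then show ?thesis unfolding pf2 Lf_def Qh_def by (simp add: power_mult)
    qed
    have lM: "[(Qh - 1) * l = 0] (mod (CARD('a) - 1))"
    proof -
      have g: "(q - 1) * (\<Sum>i<h. q ^ i) = Qh - 1" unfolding Qh_def by (rule nat_geo[OF q1])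
      have "(Qh - 1) * l = ((q - 1) * (\<Sum>i<h. q ^ i)) * l" by (simp only: g)
      also have "\<dots> = (\<Sum>i<h. q ^ i) * ((q - 1) * l)" by (simp only: ac_simps)
      finally have "(Qh - 1) * l = (\<Sum>i<h. q ^ i) * ((q - 1) * l)" .
      then show ?thesis unfolding lq by (simp add: cong_0_iff)
    qed
    have Linj: "X = Y" if "Lf X = Lf Y" for X Y
    proof (rule ccontr)
      assume "X \<noteq> Y"
      define D where "D = X - Y"
      have D0: "D \<noteq> 0" using \<open>X \<noteq> Y\<close> unfolding D_def by simp
      have "X ^ Qh = Y ^ Qh + D ^ Qh" using frob[of Y D] unfolding D_def by simp
      then have "D ^ Qh + a * D = 0" using that unfolding Lf_def D_def by (simp add: algebra_simps)
      moreover have "D ^ Qh = D * D ^ (Qh - 1)" using Qh1 by (metis Suc_diff_1 less_le_trans zero_less_one power_Suc)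
      ultimately have "D * (D ^ (Qh - 1) + a) = 0" by (simp add: algebra_simps)
      then have Dq: "D ^ (Qh - 1) = - a" using D0 by (simp add: add_eq_0_iff2)
      have "(- a) ^ l = D ^ ((Qh - 1) * l)" unfolding Dq[symmetric] by (simp add: power_mult)
      also have "\<dots> = D ^ 0" by (rule ff_pow_cong[OF D0 lM])
      finally show False using al by simp
    qed
    have injf: "inj (poly f)"
    proof (rule injI)
      fix x y assume "poly f x = poly f y"
      then have "Lf (x ^ r) = Lf (y ^ r)" unfolding fL .
      then have "x ^ r = y ^ r" by (rule Linj)
      then show "x = y" by (rule Pinj)
    qed
    have perm: "permutes_field f" unfolding permutes_field_def bij_def
      using injf finite_UNIV_inj_surj[OF finite_class.finite_UNIV injf] by blast
    have dv: "(monom 1 CARD('a) - monom 1 1) dvd (monom (1::'a) (r + (q - 1)) - monom 1 (r * q ^ h))"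
      by (rule monom_dvd_lemma) (use assms(4) C M cong_sym ff_card_ge2[where 'a='a] Qh1[unfolded Qh_def] in \<open>simp_all\<close>)
    have eqf: "f - (monom 1 (r * q ^ h) + monom a (r * q ^ 0)) = monom (1::'a) (r + (q - 1)) - monom 1 (r * q ^ h)"
      unfolding fsplit by simp
    have "(monom 1 CARD('a) - monom 1 1) dvd (f - (monom 1 (r * q ^ h) + monom a (r * q ^ 0)))"
      unfolding eqf by (rule dv)
    then have "lin_binom_comp_monom q f" unfolding lin_binom_comp_monom_def by blast
    then show "permutes_field f \<and> lin_binom_comp_monom q f" using perm by blast
  qed
qed

end
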